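(* There exists an absolute constant $C>0$ such that the following holds. Let $d\ge 1$ and let $H=(V,E)$ be a finite $d$-uniform hypergraph with $|E|\ge 1$, one (unknown) edge $e\in E$ of which is defective. Then there is an adaptive group testing algorithm that identifies $e$, for every possible choice of $e\in E$, using at most $$\log_2|E|+2\sqrt{d\log_2|E|}+C\,d$$ tests. In particular, if $d\ge \log_2|E|$ the number of tests is $O(d)$, and if $d=o(\log_2|E|)$ it is $\log_2|E|(1+o(1))$.
   Context: Group testing on a hypergraph: $H=(V,E)$ is a finite hypergraph (each edge is a subset of the finite vertex set $V$); $H$ is $d$-uniform if every edge has exactly $d$ vertices. Exactly one edge $e\in E$ is defective and unknown. A test is an arbitrary subset $S\subseteq V$; its outcome is positive if $S\cap e\neq\emptyset$ and negative otherwise. An adaptive algorithm may choose each test depending on the outcomes of all previous tests. The algorithm must output $e$ correctly for every $e\in E$; its number of tests is the worst case over $e\in E$. *)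

theory Defs
  imports Complex_Main
begin

text \<open>An adaptive group testing algorithm is a decision tree: an internal node
  performs a test S; the algorithm continues in the first subtree if the outcome
  is positive (S meets the defective edge) and in the second one otherwise.\<close>

datatype 'a gt_tree = Output "'a set" | Test "'a set" "'a gt_tree" "'a gt_tree"

definition test_outcome :: "'a set \<Rightarrow> 'a set \<Rightarrow> bool" where
  "test_outcome S e \<longleftrightarrow> S \<inter> e \<noteq> {}"

fun gt_output :: "'a gt_tree \<Rightarrow> 'a set \<Rightarrow> 'a set" where
  "gt_output (Output f) e = f"
| "gt_output (Test S tpos tneg) e =
     (if test_outcome S e then gt_output tpos e else gt_output tneg e)"

fun gt_num_tests :: "'a gt_tree \<Rightarrow> 'a set \<Rightarrow> nat" where
  "gt_num_tests (Output f) e = 0"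
| "gt_num_tests (Test S tpos tneg) e =
     Suc (if test_outcome S e then gt_num_tests tpos e else gt_num_tests tneg e)"

definition uniform_hypergraph :: "nat \<Rightarrow> 'a set \<Rightarrow> 'a set set \<Rightarrow> bool" where
  "uniform_hypergraph d V E \<longleftrightarrow> finite V \<and> (\<forall>e\<in>E. e \<subseteq> V \<and> card e = d)"

end

theory Submission
  imports Defs
begin

lemma aux: "(X::real) \<le> max w (2*h) \<Longrightarrow> w \<le> 2*h \<Longrightarrow> 0 \<le> w \<Longrightarrow> 2*X \<le> max w (2*(2*h))"
  by (auto simp: max_def)

lemma stage:
  fixes F :: "nat set set" and key :: "nat set \<Rightarrow> nat" and S :: "nat \<Rightarrow> nat set"
    and Tc :: "nat \<Rightarrow> nat gt_tree"
  assumes fin: "finite F" and St: "\<And>e t. e \<in> F \<Longrightarrow> test_outcome (S t) e \<longleftrightarrow> key e \<le> t"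
  shows "\<exists>T. \<forall>e\<in>F. gt_output T e = gt_output (Tc (key e)) e \<and>
     (\<exists>s. gt_num_tests T e = s + gt_num_tests (Tc (key e)) e \<and>
        (2::real)^s * real (card {e'\<in>F. key e' = key e}) \<le> 4 * real (card F))"
proof -
  define w where "w x = real (card {e'\<in>F. key e' = x})" for x
  define c where "c x = real (card {e'\<in>F. key e' < x})" for x
  define m where "m x = 2 * c x + w x" for x
  have w0: "w x \<ge> 0" for x by (simp add: w_def)
  have c0: "c x \<ge> 0" for x by (simp add: c_def)
  have cw: "c x + w x \<le> c y" if "x < y" for x y
  proof -
    have "card {e'\<in>F. key e' < x} + card {e'\<in>F. key e' = x} = card ({e'\<in>F. key e' < x} \<union> {e'\<in>F. key e' = x})"
      by (rule card_Un_disjoint[symmetric]) (use fin in auto)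
    also have "\<dots> \<le> card {e'\<in>F. key e' < y}"
      by (rule card_mono) (use fin that in auto)
    finally show ?thesis unfolding c_def w_def by linarith
  qed
  have cwF: "c x + w x \<le> real (card F)" for x
  proof -
    have "card {e'\<in>F. key e' < x} + card {e'\<in>F. key e' = x} = card ({e'\<in>F. key e' < x} \<union> {e'\<in>F. key e' = x})"
      by (rule card_Un_disjoint[symmetric]) (use fin in auto)
    also have "\<dots> \<le> card F"
      by (rule card_mono) (use fin in auto)
    finally show ?thesis unfolding c_def w_def by linarith
  qed
  have wpos: "1 \<le> w (key e)" if "e \<in> F" for e
  proof -
    have "card {e'\<in>F. key e' = key e} \<noteq> 0" using fin that by auto
    then show ?thesis unfolding w_def by linarith
  qed
  have gap: "\<bar>m (key e1) - m (key e2)\<bar> \<ge> w (key e1) + w (key e2)"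
    if "key e1 \<noteq> key e2" for e1 e2
  proof (cases "key e1 < key e2")
    case True
    from cw[OF this] w0[of "key e1"] w0[of "key e2"] show ?thesis unfolding m_def by (simp add: abs_if)
  next
    case False
    with that have "key e2 < key e1" by simp
    from cw[OF this] w0[of "key e1"] w0[of "key e2"] show ?thesis unfolding m_def by (simp add: abs_if)
  qed
  have mono: "key e1 < key e2" if "m (key e1) < m (key e2)" for e1 e2
  proof (rule ccontr)
    assume "\<not> key e1 < key e2"
    then consider "key e1 = key e2" | "key e2 < key e1" by linarith
    then show False
    proof cases
      case 1 then show False using that by simp
    next
      case 2 from cw[OF this] that w0[of "key e1"] w0[of "key e2"] show False unfolding m_def by simp
    qed
  qed
  define In where "In al l e \<longleftrightarrow> al \<le> m (key e) \<and> m (key e) < al + l" for al l :: real and e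
  define P where "P al l T \<longleftrightarrow> (\<forall>e\<in>F. In al l e \<longrightarrow> gt_output T e = gt_output (Tc (key e)) e \<and>
        (\<exists>s. gt_num_tests T e = s + gt_num_tests (Tc (key e)) e \<and>
          (2::real)^s * w (key e) \<le> max (w (key e)) (2 * l)))" for al l T
  have single: "\<exists>T. P al l T" if "\<not> (\<exists>e1\<in>F. \<exists>e2\<in>F. In al l e1 \<and> In al l e2 \<and> key e1 \<noteq> key e2)" for al l
  proof (cases "\<exists>e0\<in>F. In al l e0")
    case True
    then obtain e0 where e0: "e0 \<in> F" "In al l e0" by blast
    have "P al l (Tc (key e0))" unfolding P_def
    proof (intro ballI impI)
      fix e assume "e \<in> F" "In al l e"
      with that e0 have "key e = key e0" by blast
      then show "gt_output (Tc (key e0)) e = gt_output (Tc (key e)) e \<and>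
        (\<exists>s. gt_num_tests (Tc (key e0)) e = s + gt_num_tests (Tc (key e)) e \<and>
          (2::real)^s * w (key e) \<le> max (w (key e)) (2 * l))"
        by (intro conjI exI[of _ 0]) auto
    qed
    then show ?thesis by blast
  next
    case False
    then have "P al l (Tc 0)" unfolding P_def by blast
    then show ?thesis by blast
  qed
  have big: "l > 2" if "e1\<in>F" "e2\<in>F" "In al l e1" "In al l e2" "key e1 \<noteq> key e2" for al l e1 e2
  proof -
    have "\<bar>m (key e1) - m (key e2)\<bar> \<ge> 2"
      using gap[OF that(5)] wpos[OF that(1)] wpos[OF that(2)] by linarith
    moreover have "\<bar>m (key e1) - m (key e2)\<bar> < l" using that(3,4) unfolding In_def by linarith
    ultimately show ?thesis by linarith
  qed
  have main: "\<forall>al l. 0 < l \<longrightarrow> l \<le> 2^n \<longrightarrow> (\<exists>T. P al l T)" for n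
  proof (induction n)
    case 0
    show ?case
    proof (intro allI impI)
      fix al l :: real assume "0 < l" "l \<le> 2^0"
      then have "\<not> (\<exists>e1\<in>F. \<exists>e2\<in>F. In al l e1 \<and> In al l e2 \<and> key e1 \<noteq> key e2)"
        using big by fastforce
      then show "\<exists>T. P al l T" by (rule single)
    qed
  next
    case (Suc n)
    show ?case
    proof (intro allI impI)
      fix al l :: real assume l: "0 < l" "l \<le> 2^Suc n"
      show "\<exists>T. P al l T"
      proof (cases "\<exists>e1\<in>F. \<exists>e2\<in>F. In al l e1 \<and> In al l e2 \<and> key e1 \<noteq> key e2")
        case False then show ?thesis using single by blast
      next
        case True
        define h where "h = l/2"
        have hl: "l = 2*h" unfolding h_def by simp
        have h: "h \<le> 2^n" "0 < h" using l unfolding hl by auto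
        obtain T1 where T1: "P al (h) T1" using Suc.IH h by blast
        obtain T2 where T2: "P (al+h) (h) T2" using Suc.IH h by blast
        have split: "In al l e \<longleftrightarrow> In al (h) e \<or> In (al+h) (h) e" for e
          unfolding In_def hl using h by auto
        define A1 where "A1 = {e\<in>F. In al (h) e}"
        define A2 where "A2 = {e\<in>F. In (al+h) (h) e}"
        have mx: "max (w x) (2 * (h)) \<le> max (w x) (2 * l)" for x using h unfolding hl by auto
        show ?thesis
        proof (cases "A1 = {}")
          case True
          have "P al l T2" unfolding P_def
          proof (intro ballI impI)
            fix e assume e: "e \<in> F" "In al l e"
            with True split have "In (al+h) (h) e" unfolding A1_def by blast
            with T2 e(1) show "gt_output T2 e = gt_output (Tc (key e)) e \<and>
              (\<exists>s. gt_num_tests T2 e = s + gt_num_tests (Tc (key e)) e \<and>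
              (2::real)^s * w (key e) \<le> max (w (key e)) (2 * l))"
              unfolding P_def using mx by (meson order_trans)
          qed
          then show ?thesis by blast
        next
          case A1ne: False
          show ?thesis
          proof (cases "A2 = {}")
            case True
            have "P al l T1" unfolding P_def
            proof (intro ballI impI)
              fix e assume e: "e \<in> F" "In al l e"
              with True split have "In al (h) e" unfolding A2_def by blast
              with T1 e(1) show "gt_output T1 e = gt_output (Tc (key e)) e \<and>
                (\<exists>s. gt_num_tests T1 e = s + gt_num_tests (Tc (key e)) e \<and>
                (2::real)^s * w (key e) \<le> max (w (key e)) (2 * l))"
                unfolding P_def using mx by (meson order_trans)
            qed
            then show ?thesis by blast
          next
            case A2ne: False
            define t where "t = Max (key ` A1)"
            have finA1: "finite (key ` A1)" using fin unfolding A1_def by simp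
            have le_t: "key e \<le> t" if "e \<in> A1" for e
              unfolding t_def using finA1 that by simp
            have gt_t: "t < key e" if "e \<in> A2" for e
            proof -
              have "t \<in> key ` A1" unfolding t_def using finA1 A1ne by simp
              then obtain e' where e': "e' \<in> A1" "t = key e'" by blast
              have "m (key e') < m (key e)" using e' that unfolding A1_def A2_def In_def by auto
              then show ?thesis using mono e' by simp
            qed
            have pair: "w (key e) + w (key e') \<le> l" if "e \<in> A1" "e' \<in> A2" for e e'
            proof -
              have m1: "m (key e) < al + h" "al + h \<le> m (key e')" "al \<le> m (key e)" "m (key e') < al + h + h"
                using that unfolding A1_def A2_def In_def by auto
              then have "key e < key e'" using mono by force
              from cw[OF this] have "m (key e) + w (key e) + w (key e') \<le> m (key e')"
                unfolding m_def by simp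
              with m1 show ?thesis unfolding hl by linarith
            qed
            obtain e1 where e1: "e1 \<in> A1" using A1ne by blast
            obtain e2 where e2: "e2 \<in> A2" using A2ne by blast
            have wl: "w (key e) \<le> l" if "e \<in> A1 \<union> A2" for e
            proof (cases "e \<in> A1")
              case True
              from pair[OF True e2] w0[of "key e2"] show ?thesis by linarith
            next
              case False
              with that have "e \<in> A2" by blast
              from pair[OF e1 this] w0[of "key e1"] show ?thesis by linarith
            qed
            have "P al l (Test (S t) T1 T2)" unfolding P_def
            proof (intro ballI impI)
              fix e assume e: "e \<in> F" "In al l e"
              show "gt_output (Test (S t) T1 T2) e = gt_output (Tc (key e)) e \<and>
                (\<exists>s. gt_num_tests (Test (S t) T1 T2) e = s + gt_num_tests (Tc (key e)) e \<and>
                (2::real)^s * w (key e) \<le> max (w (key e)) (2 * l))"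
              proof (cases "In al (h) e")
                case True
                then have eA: "e \<in> A1" using e unfolding A1_def by auto
                have pos: "test_outcome (S t) e" using St[OF e(1)] le_t[OF eA] by simp
                obtain s where s: "gt_output T1 e = gt_output (Tc (key e)) e"
                  "gt_num_tests T1 e = s + gt_num_tests (Tc (key e)) e"
                  "(2::real)^s * w (key e) \<le> max (w (key e)) (2 * (h))"
                  using T1 e(1) True unfolding P_def by blast
                have "(2::real)^Suc s * w (key e) \<le> max (w (key e)) (2 * l)"
                  using aux[OF s(3)] wl[of e] eA w0[of "key e"] unfolding hl by (simp add: mult.assoc)
                then show ?thesis using pos s by (intro conjI exI[of _ "Suc s"]) auto
              next
                case False
                then have eA: "e \<in> A2" "In (al+h) (h) e" using e split unfolding A2_def by auto
                have neg: "\<not> test_outcome (S t) e" using St[OF e(1)] gt_t[OF eA(1)] by simp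
                obtain s where s: "gt_output T2 e = gt_output (Tc (key e)) e"
                  "gt_num_tests T2 e = s + gt_num_tests (Tc (key e)) e"
                  "(2::real)^s * w (key e) \<le> max (w (key e)) (2 * (h))"
                  using T2 e(1) eA(2) unfolding P_def by blast
                have "(2::real)^Suc s * w (key e) \<le> max (w (key e)) (2 * l)"
                  using aux[OF s(3)] wl[of e] eA w0[of "key e"] unfolding hl by (simp add: mult.assoc)
                then show ?thesis using neg s by (intro conjI exI[of _ "Suc s"]) auto
              qed
            qed
            then show ?thesis by blast
          qed
        qed
      qed
    qed
  qed
  have "\<exists>T. P 0 (2 * real (card F)) T"
  proof (cases "F = {}")
    case True then show ?thesis unfolding P_def by blast
  next
    case False
    then have "0 < real (card F)" using fin by (simp add: card_gt_0_iff)
    moreover have "real (card F) \<le> 2 ^ card F"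
      by (metis of_nat_le_iff of_nat_numeral of_nat_power less_exp less_imp_le)
    ultimately have "0 < 2 * real (card F)" "2 * real (card F) \<le> 2 ^ Suc (card F)" by auto
    then show ?thesis using main[of "Suc (card F)"] by blast
  qed
  then obtain T where T: "P 0 (2 * real (card F)) T" by blast
  show ?thesis
  proof (intro exI ballI)
    fix e assume e: "e \<in> F"
    have "In 0 (2 * real (card F)) e"
      unfolding In_def m_def using c0[of "key e"] w0[of "key e"] cwF[of "key e"] wpos[OF e] by auto
    then obtain s where s: "gt_output T e = gt_output (Tc (key e)) e"
      "gt_num_tests T e = s + gt_num_tests (Tc (key e)) e"
      "(2::real)^s * w (key e) \<le> max (w (key e)) (2 * (2 * real (card F)))"
      using T e unfolding P_def by blast
    have "max (w (key e)) (2 * (2 * real (card F))) = 4 * real (card F)"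
      using cwF[of "key e"] c0[of "key e"] w0[of "key e"] by auto
    with s show "gt_output T e = gt_output (Tc (key e)) e \<and>
     (\<exists>s. gt_num_tests T e = s + gt_num_tests (Tc (key e)) e \<and>
        (2::real)^s * real (card {e'\<in>F. key e' = key e}) \<le> 4 * real (card F))"
      unfolding w_def by auto
  qed
qed


lemma global:
  fixes F :: "nat set set" and a k :: nat
  shows "finite F \<Longrightarrow> F \<noteq> {} \<Longrightarrow> (\<forall>e\<in>F. finite e) \<Longrightarrow>
   (\<forall>e\<in>F. \<forall>e'\<in>F. e \<inter> {..<a} = e' \<inter> {..<a}) \<Longrightarrow> (\<forall>e\<in>F. card (e \<inter> {a..}) = k) \<Longrightarrow>
   \<exists>T. \<forall>e\<in>F. gt_output T e = e \<and> (2::real)^(gt_num_tests T e) \<le> real (card F) * 4^k"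
proof (induction k arbitrary: F a)
  case 0
  obtain e0 where e0: "e0 \<in> F" using 0 by blast
  have eq: "e = e \<inter> {..<a}" if "e \<in> F" for e
  proof -
    have "e \<inter> {a..} = {}" using 0 that by auto
    then show ?thesis by (auto simp: disjoint_iff not_le)
  qed
  have all: "e = e0" if "e \<in> F" for e
    using eq[OF that] eq[OF e0] 0(4) that e0 by metis
  have "1 \<le> card F" using 0 by (simp add: Suc_le_eq card_gt_0_iff)
  then have "(1::real) \<le> real (card F)" by simp
  then show ?case using all by (intro exI[of _ "Output e0"]) auto
next
  case (Suc k)
  define key where "key e = Min (e \<inter> {a..})" for e :: "nat set"
  have kfacts: "key e \<in> e \<and> a \<le> key e \<and> (\<forall>y\<in>e. a \<le> y \<longrightarrow> key e \<le> y)" if "e \<in> F" for e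
  proof -
    have ne: "e \<inter> {a..} \<noteq> {}" using Suc.prems(5) that by force
    have fe: "finite (e \<inter> {a..})" using Suc.prems(3) that by auto
    show ?thesis unfolding key_def using Min_in[OF fe ne] Min_le[OF fe] by auto
  qed
  have sub: "\<exists>T. \<forall>e\<in>{e\<in>F. key e = x}. gt_output T e = e \<and>
      (2::real)^(gt_num_tests T e) \<le> real (card {e\<in>F. key e = x}) * 4^k" if "x \<in> key ` F" for x
  proof (rule Suc.IH)
    show "finite {e\<in>F. key e = x}" using Suc.prems(1) by simp
    show "{e\<in>F. key e = x} \<noteq> {}" using that by auto
    show "\<forall>e\<in>{e\<in>F. key e = x}. finite e" using Suc.prems(3) by simp
    have below: "e \<inter> {..<Suc x} = insert x (e \<inter> {..<a})" if "e \<in> F" "key e = x" for e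
    proof -
      have k: "x \<in> e" "a \<le> x" "\<forall>y\<in>e. a \<le> y \<longrightarrow> x \<le> y" using kfacts[OF that(1)] that(2) by auto
      show ?thesis
      proof (intro equalityI subsetI)
        fix y assume "y \<in> e \<inter> {..<Suc x}"
        then have y: "y \<in> e" "y \<le> x" by auto
        show "y \<in> insert x (e \<inter> {..<a})"
        proof (cases "y < a")
          case True then show ?thesis using y by simp
        next
          case False then have "x \<le> y" using k(3) y(1) by simp
          then show ?thesis using y by simp
        qed
      next
        fix y assume "y \<in> insert x (e \<inter> {..<a})"
        then show "y \<in> e \<inter> {..<Suc x}" using k by auto
      qed
    qed
    show "\<forall>e\<in>{e\<in>F. key e = x}. \<forall>e'\<in>{e\<in>F. key e = x}. e \<inter> {..<Suc x} = e' \<inter> {..<Suc x}"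
    proof (intro ballI)
      fix e e' assume e: "e \<in> {e\<in>F. key e = x}" and e': "e' \<in> {e\<in>F. key e = x}"
      have "e \<inter> {..<a} = e' \<inter> {..<a}" using Suc.prems(4) e e' by blast
      then show "e \<inter> {..<Suc x} = e' \<inter> {..<Suc x}" using below e e' by simp
    qed
    have above: "e \<inter> {a..} = insert x (e \<inter> {Suc x..})" if "e \<in> F" "key e = x" for e
    proof -
      have k: "x \<in> e" "a \<le> x" "\<forall>y\<in>e. a \<le> y \<longrightarrow> x \<le> y" using kfacts[OF that(1)] that(2) by auto
      show ?thesis
      proof (intro equalityI subsetI)
        fix y assume "y \<in> e \<inter> {a..}"
        then have y: "y \<in> e" "a \<le> y" by auto
        then have "x \<le> y" using k(3) by simp
        then show "y \<in> insert x (e \<inter> {Suc x..})" using y by auto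
      next
        fix y assume "y \<in> insert x (e \<inter> {Suc x..})"
        then show "y \<in> e \<inter> {a..}" using k by auto
      qed
    qed
    show "\<forall>e\<in>{e\<in>F. key e = x}. card (e \<inter> {Suc x..}) = k"
    proof
      fix e assume e: "e \<in> {e\<in>F. key e = x}"
      have "card (e \<inter> {a..}) = Suc k" using Suc.prems(5) e by simp
      moreover have "card (e \<inter> {a..}) = Suc (card (e \<inter> {Suc x..}))"
      proof -
        have eq: "e \<inter> {a..} = insert x (e \<inter> {Suc x..})" using above e by simp
        have "finite (e \<inter> {Suc x..})" using e Suc.prems(3) by simp
        then show ?thesis unfolding eq by (subst card_insert_disjoint) auto
      qed
      ultimately show "card (e \<inter> {Suc x..}) = k" by simp
    qed
  qed
  define Tc where "Tc x = (SOME T. \<forall>e\<in>{e\<in>F. key e = x}. gt_output T e = e \<and>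
      (2::real)^(gt_num_tests T e) \<le> real (card {e\<in>F. key e = x}) * 4^k)" for x
  have Tc: "\<forall>e\<in>{e\<in>F. key e = x}. gt_output (Tc x) e = e \<and>
      (2::real)^(gt_num_tests (Tc x) e) \<le> real (card {e\<in>F. key e = x}) * 4^k" if "x \<in> key ` F" for x
    unfolding Tc_def by (rule someI_ex[OF sub[OF that]])
  have St: "test_outcome {a..t} e \<longleftrightarrow> key e \<le> t" if "e \<in> F" for e t
  proof
    assume "test_outcome {a..t} e"
    then obtain y where y: "y \<in> e" "a \<le> y" "y \<le> t" unfolding test_outcome_def by auto
    then have "key e \<le> y" using kfacts[OF that] by blast
    then show "key e \<le> t" using y by simp
  next
    assume "key e \<le> t"
    then have "key e \<in> {a..t} \<inter> e" using kfacts[OF that] by auto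
    then show "test_outcome {a..t} e" unfolding test_outcome_def by blast
  qed
  obtain T where T: "\<forall>e\<in>F. gt_output T e = gt_output (Tc (key e)) e \<and>
     (\<exists>s. gt_num_tests T e = s + gt_num_tests (Tc (key e)) e \<and>
        (2::real)^s * real (card {e'\<in>F. key e' = key e}) \<le> 4 * real (card F))"
    using stage[of F "\<lambda>t. {a..t}" key Tc, OF Suc.prems(1) St] by blast
  show ?case
  proof (intro exI ballI conjI)
    fix e assume e: "e \<in> F"
    have tc: "gt_output (Tc (key e)) e = e"
      "(2::real)^(gt_num_tests (Tc (key e)) e) \<le> real (card {e'\<in>F. key e' = key e}) * 4^k"
      using Tc[of "key e"] e by auto
    from T e obtain s where s: "gt_output T e = gt_output (Tc (key e)) e"
      "gt_num_tests T e = s + gt_num_tests (Tc (key e)) e"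
      "(2::real)^s * real (card {e'\<in>F. key e' = key e}) \<le> 4 * real (card F)" by blast
    show "gt_output T e = e" using s tc by simp
    define W where "W = real (card {e'\<in>F. key e' = key e})"
    define p where "p = (2::real)^s"
    define q where "q = (2::real)^(gt_num_tests (Tc (key e)) e)"
    have Wpos: "W > 0" unfolding W_def using e Suc.prems(1) by (auto simp: card_gt_0_iff)
    have p0: "p \<ge> 0" "q \<ge> 0" unfolding p_def q_def by auto
    have "p * q * W \<le> (4 * real (card F)) * (W * 4^k)"
      using mult_mono[OF s(3)[folded W_def p_def] tc(2)[folded W_def q_def]] p0 Wpos
      by (simp add: mult_ac)
    then have "p * q * W \<le> (real (card F) * 4^Suc k) * W" by (simp add: mult_ac)
    then have "p * q \<le> real (card F) * 4^Suc k" using Wpos by simp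
    then show "(2::real)^(gt_num_tests T e) \<le> real (card F) * 4^Suc k"
      unfolding p_def q_def s(2) by (simp add: power_add)
  qed
qed


lemma log_bound:
  fixes N m d :: nat
  assumes "(2::real)^N \<le> real m * 4^d" "m \<ge> 1"
  shows "real N \<le> log 2 (real m) + 2 * real d"
proof -
  have pos: "(0::real) < 2^N" "0 < real m * 4^d" using assms by auto
  have "log 2 ((2::real)^N) \<le> log 2 (real m * 4^d)"
    using assms(1) pos by (subst log_le_cancel_iff) auto
  moreover have "log 2 ((2::real)^N) = real N" by (simp add: log_nat_power)
  moreover have "log 2 (real m * 4^d) = log 2 (real m) + log 2 ((4::real)^d)"
    using assms by (subst log_mult) auto
  moreover have "log 2 ((4::real)^d) = 2 * real d"
  proof -
    have "(4::real)^d = 2^(2*d)" by (simp add: power_mult)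
    then show ?thesis by (simp add: log_nat_power)
  qed
  ultimately show ?thesis by linarith
qed

theorem theorem1:
  shows "\<exists>C::real. C > 0 \<and>
    (\<forall>(d::nat) (V::nat set) (E::nat set set).
       d \<ge> 1 \<longrightarrow> uniform_hypergraph d V E \<longrightarrow> card E \<ge> 1 \<longrightarrow>
       (\<exists>T::nat gt_tree. \<forall>e\<in>E.
          gt_output T e = e \<and>
          real (gt_num_tests T e) \<le>
            log 2 (card E) + 2 * sqrt (real d * log 2 (card E)) + C * real d))"
proof (intro exI[of _ 2] conjI allI impI)
  fix d :: nat and V :: "nat set" and E :: "nat set set"
  assume d: "d \<ge> 1" and H: "uniform_hypergraph d V E" and cE: "card E \<ge> 1"
  have finV: "finite V" and sub: "\<forall>e\<in>E. e \<subseteq> V \<and> card e = d" using H unfolding uniform_hypergraph_def by auto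
  have finE: "finite E"
  proof -
    have "E \<subseteq> Pow V" using sub by auto
    then show ?thesis using finV finite_subset by blast
  qed
  have neE: "E \<noteq> {}" using cE by auto
  have fe: "\<forall>e\<in>E. finite e" using sub finV finite_subset by blast
  have ag: "\<forall>e\<in>E. \<forall>e'\<in>E. e \<inter> {..<0::nat} = e' \<inter> {..<0}" by simp
  have cd: "\<forall>e\<in>E. card (e \<inter> {0::nat..}) = d" using sub by simp
  obtain T where T: "\<forall>e\<in>E. gt_output T e = e \<and> (2::real)^(gt_num_tests T e) \<le> real (card E) * 4^d"
    using global[OF finE neE fe ag cd] by blast
  have lg: "log 2 (real (card E)) \<ge> 0" using cE by simp
  show "\<exists>T::nat gt_tree. \<forall>e\<in>E.
          gt_output T e = e \<and>
          real (gt_num_tests T e) \<le>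
            log 2 (card E) + 2 * sqrt (real d * log 2 (card E)) + 2 * real d"
  proof (intro exI[of _ T] ballI conjI)
    fix e assume e: "e \<in> E"
    show "gt_output T e = e" using T e by blast
    have "real (gt_num_tests T e) \<le> log 2 (real (card E)) + 2 * real d"
      using log_bound[of "gt_num_tests T e" "card E" d] T e cE by blast
    moreover have "0 \<le> sqrt (real d * log 2 (card E))" using lg by simp
    ultimately show "real (gt_num_tests T e) \<le>
            log 2 (card E) + 2 * sqrt (real d * log 2 (card E)) + 2 * real d" by linarith
  qed
qed simp

end
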